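(* Suppose Assumptions 1–5 hold and the set $\Theta^*$ of equilibrium models is finite. Write $\Theta^*\cup\{0,1\}=\{\theta_0,\theta_1,\dots,\theta_N\}$ with $0=\theta_0<\theta_1<\dots<\theta_N=1$. Then for each $n\in\{0,\dots,N-1\}$, exactly one of the following holds: (i) for every $\theta\in(\theta_n,\theta_{n+1})$ and every $x\in F(\delta_\theta)$, $\theta(\delta_x)>\theta$; (ii) for every $\theta\in(\theta_n,\theta_{n+1})$ and every $x\in F(\delta_\theta)$, $\theta(\delta_x)<\theta$.
   Context: Setting. $X$ is a finite set of actions, $Y$ a set of consequences, $Q:X\to\Delta Y$ the true consequence function, and $\{Q_\theta:\theta\in\Theta\}$ the agent's models with $\Theta=[0,1]$. Assumptions 1–2: $Y$ is a compact subset of a Euclidean space; there is a Borel probability measure $\nu$ on $Y$ with $Q(\cdot\mid x),Q_\theta(\cdot\mid x)\ll\nu$, densities $q(\cdot\mid x)$, $q_\theta(\cdot\mid x)$; $\theta\mapsto q_\theta(\cdot\mid x)$ is continuous $Q(\cdot\mid x)$-a.s.; for each $x$ there is $g_x\in L^2(Y,Q(\cdot\mid x))$ with $|\ln(q(y\mid x)/q_\theta(y\mid x))|\le g_x(y)$ for all $\theta$, $Q(\cdot\mid x)$-a.s. Assumption 3: the prior has full support on $\Theta$. Assumption 4: the policy correspondence $F:\Delta\Theta\rightrightarrows X$ (nonempty-valued, $\Delta\Theta$ = Borel probability measures on $\Theta$) is upper hemicontinuous. $\delta_\theta$ is the point mass at $\theta\in\Theta$, $\delta_x\in\Delta X$ the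 point mass at action $x$; for $S\subseteq X$, $\Delta S$ is the set of distributions on $X$ supported in $S$; $F(A)=\bigcup_{\mu\in A}F(\mu)$ for $A\subseteq\Delta\Theta$. KLD: $K(\theta,\sigma)=\sum_x\sigma(x)\int\ln\frac{q(y\mid x)}{q_\theta(y\mid x)}q(y\mid x)\nu(dy)$ for $\sigma\in\Delta X$. Assumption 5 (identifiability): (i) for each $\sigma\in\Delta X$, $K(\cdot,\sigma)$ has a unique minimizer $\theta(\sigma)\in[0,1]$; (ii) for each $\sigma$ with $\theta(\sigma)\in(0,1)$, $K(\cdot,\sigma)$ is twice differentiable at $\theta(\sigma)$ with positive second derivative there. Equilibrium: $\sigma\in\Delta X$ with $\sigma\in\Delta F(\{\delta_{\theta(\sigma)}\})$, i.e. $\sigma$ is supported in $F(\delta_{\theta(\sigma)})$. A model $\theta^*\in[0,1]$ is an equilibrium model if $\theta^*=\theta(\sigma^* )$ for some equilibrium $\sigma^*$; $\Theta^*$ is the set of equilibrium models. *)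

theory Defs
  imports "HOL-Probability.Probability"
begin

definition Delta_X :: "('x::finite \<Rightarrow> real) set" where
  "Delta_X = {\<sigma>. (\<forall>x. 0 \<le> \<sigma> x) \<and> (\<Sum>x\<in>UNIV. \<sigma> x) = 1}"

definition dirac_X :: "'x::finite \<Rightarrow> ('x \<Rightarrow> real)" where
  "dirac_X x = (\<lambda>x'. if x' = x then 1 else 0)"

definition supp_X :: "('x::finite \<Rightarrow> real) \<Rightarrow> 'x set" where
  "supp_X \<sigma> = {x. \<sigma> x \<noteq> 0}"

definition Theta_space :: "real measure" where
  "Theta_space = restrict_space borel {0..1}"

definition Delta_Theta :: "real measure set" where
  "Delta_Theta = {\<mu>. prob_space \<mu> \<and> sets \<mu> = sets Theta_space}"

definition dirac_Theta :: "real \<Rightarrow> real measure" where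
  "dirac_Theta \<theta> = return Theta_space \<theta>"

definition weak_conv_Theta :: "(nat \<Rightarrow> real measure) \<Rightarrow> real measure \<Rightarrow> bool" where
  "weak_conv_Theta \<mu>s \<mu> = (\<forall>f::real \<Rightarrow> real. continuous_on {0..1} f \<longrightarrow>
      (\<lambda>n. \<integral>\<theta>. f \<theta> \<partial>(\<mu>s n)) \<longlonglongrightarrow> (\<integral>\<theta>. f \<theta> \<partial>\<mu>))"

text \<open>Upper hemicontinuity of a correspondence from Delta Theta (weak topology, metrizable since
  [0,1] is compact metric) into the finite discrete set of actions: for every open V containing
  F mu (equivalently V = F mu, since every subset of X is open) there is a neighbourhood of mu
  mapped into V; stated sequentially.\<close>
definition uhc_policy :: "(real measure \<Rightarrow> 'x set) \<Rightarrow> bool" where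
  "uhc_policy F = (\<forall>\<mu>\<in>Delta_Theta. \<forall>\<mu>s. (\<forall>n. \<mu>s n \<in> Delta_Theta) \<and> weak_conv_Theta \<mu>s \<mu> \<longrightarrow>
      eventually (\<lambda>n. F (\<mu>s n) \<subseteq> F \<mu>) sequentially)"

definition Qdist :: "'y measure \<Rightarrow> ('x \<Rightarrow> 'y \<Rightarrow> real) \<Rightarrow> 'x \<Rightarrow> 'y measure" where
  "Qdist \<nu> q x = density \<nu> (\<lambda>y. ennreal (q x y))"

definition is_density :: "'y measure \<Rightarrow> ('y \<Rightarrow> real) \<Rightarrow> bool" where
  "is_density \<nu> f = (f \<in> borel_measurable \<nu> \<and> (\<forall>y\<in>space \<nu>. 0 \<le> f y) \<and>
      (\<integral>\<^sup>+y. ennreal (f y) \<partial>\<nu>) = 1)"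

definition KLD :: "'y measure \<Rightarrow> ('x::finite \<Rightarrow> 'y \<Rightarrow> real) \<Rightarrow> (real \<Rightarrow> 'x \<Rightarrow> 'y \<Rightarrow> real)
    \<Rightarrow> real \<Rightarrow> ('x \<Rightarrow> real) \<Rightarrow> real" where
  "KLD \<nu> q q\<theta> \<theta> \<sigma> = (\<Sum>x\<in>UNIV. \<sigma> x * (\<integral>y. ln (q x y / q\<theta> \<theta> x y) * q x y \<partial>\<nu>))"

text \<open>theta(sigma): the (assumed unique) minimizer of K(.,sigma) over [0,1].\<close>
definition KL_min :: "'y measure \<Rightarrow> ('x::finite \<Rightarrow> 'y \<Rightarrow> real) \<Rightarrow> (real \<Rightarrow> 'x \<Rightarrow> 'y \<Rightarrow> real)
    \<Rightarrow> ('x \<Rightarrow> real) \<Rightarrow> real" where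
  "KL_min \<nu> q q\<theta> \<sigma> = (THE \<theta>. \<theta> \<in> {0..1} \<and>
      (\<forall>t\<in>{0..1}. KLD \<nu> q q\<theta> \<theta> \<sigma> \<le> KLD \<nu> q q\<theta> t \<sigma>))"

definition is_equilibrium :: "'y measure \<Rightarrow> ('x::finite \<Rightarrow> 'y \<Rightarrow> real) \<Rightarrow> (real \<Rightarrow> 'x \<Rightarrow> 'y \<Rightarrow> real)
    \<Rightarrow> (real measure \<Rightarrow> 'x set) \<Rightarrow> ('x \<Rightarrow> real) \<Rightarrow> bool" where
  "is_equilibrium \<nu> q q\<theta> F \<sigma> = (\<sigma> \<in> Delta_X \<and>
      supp_X \<sigma> \<subseteq> F (dirac_Theta (KL_min \<nu> q q\<theta> \<sigma>)))"

definition equilibrium_models :: "'y measure \<Rightarrow> ('x::finite \<Rightarrow> 'y \<Rightarrow> real) \<Rightarrow> (real \<Rightarrow> 'x \<Rightarrow> 'y \<Rightarrow> real)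
    \<Rightarrow> (real measure \<Rightarrow> 'x set) \<Rightarrow> real set" where
  "equilibrium_models \<nu> q q\<theta> F = {KL_min \<nu> q q\<theta> \<sigma> | \<sigma>. is_equilibrium \<nu> q q\<theta> F \<sigma>}"

end

theory Submission
  imports Defs
begin

lemma KL_integral_cont:
  fixes \<nu> :: "'y measure" and p :: "'y \<Rightarrow> real" and r :: "real \<Rightarrow> 'y \<Rightarrow> real"
  assumes pd: "is_density \<nu> p"
    and rd: "\<forall>\<theta>\<in>{0..1}. is_density \<nu> (r \<theta>)"
    and cont: "AE y in density \<nu> (\<lambda>y. ennreal (p y)). continuous_on {0..1} (\<lambda>\<theta>. r \<theta> y)"
    and dom: "\<exists>g. g \<in> borel_measurable (density \<nu> (\<lambda>y. ennreal (p y))) \<and>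
                   integrable (density \<nu> (\<lambda>y. ennreal (p y))) (\<lambda>y. (g y)\<^sup>2) \<and>
                   (\<forall>\<theta>\<in>{0..1}. AE y in density \<nu> (\<lambda>y. ennreal (p y)).
                      0 < r \<theta> y \<and> \<bar>ln (p y / r \<theta> y)\<bar> \<le> g y)"
  shows "continuous_on {0..1} (\<lambda>\<theta>. \<integral>y. ln (p y / r \<theta> y) * p y \<partial>\<nu>)"
proof -
  let ?D = "density \<nu> (\<lambda>y. ennreal (p y))"
  have pm[measurable]: "p \<in> borel_measurable \<nu>" and pnn: "\<forall>y\<in>space \<nu>. 0 \<le> p y"
    and p1: "(\<integral>\<^sup>+y. ennreal (p y) \<partial>\<nu>) = 1"
    using pd unfolding is_density_def by auto
  have rm: "\<theta> \<in> {0..1} \<Longrightarrow> r \<theta> \<in> borel_measurable \<nu>" for \<theta>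
    using rd unfolding is_density_def by auto
  obtain g where gm: "g \<in> borel_measurable ?D" and g2: "integrable ?D (\<lambda>y. (g y)\<^sup>2)"
    and gb: "\<forall>\<theta>\<in>{0..1}. AE y in ?D. 0 < r \<theta> y \<and> \<bar>ln (p y / r \<theta> y)\<bar> \<le> g y"
    using dom by blast
  have gm'[measurable]: "g \<in> borel_measurable \<nu>" using gm by simp
  have "emeasure ?D (space ?D) = 1"
    by (simp add: emeasure_density p1 cong: nn_integral_cong)
  then interpret D: finite_measure ?D by (intro finite_measureI) simp
  have gi: "integrable ?D g"
    by (rule D.square_integrable_imp_integrable[OF gm g2])
  have wi: "integrable \<nu> (\<lambda>y. p y * g y)"
    using gi integrable_density[of g \<nu> p] pnn by (auto simp: AE_I2)
  have AEd: "(AE y in ?D. P y) \<longleftrightarrow> (AE y in \<nu>. 0 < p y \<longrightarrow> P y)" for P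
    by (subst AE_density) auto
  show ?thesis
  proof (rule continuous_on_sequentiallyI)
    fix u and a :: real assume u: "\<forall>n. u n \<in> {0..1}" and a: "a \<in> {0..1}" and ua: "u \<longlonglongrightarrow> a"
    have [measurable]: "r a \<in> borel_measurable \<nu>" using rm a by auto
    have [measurable]: "r (u i) \<in> borel_measurable \<nu>" for i using rm u by auto
    show "(\<lambda>n. \<integral>y. ln (p y / r (u n) y) * p y \<partial>\<nu>) \<longlonglongrightarrow> (\<integral>y. ln (p y / r a y) * p y \<partial>\<nu>)"
    proof (rule integral_dominated_convergence[where w="\<lambda>y. p y * g y"])
      show "(\<lambda>y. ln (p y / r a y) * p y) \<in> borel_measurable \<nu>" by measurable
      show "(\<lambda>y. ln (p y / r (u i) y) * p y) \<in> borel_measurable \<nu>" for i by measurable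
      show "integrable \<nu> (\<lambda>y. p y * g y)" by (rule wi)
      show "AE y in \<nu>. norm (ln (p y / r (u i) y) * p y) \<le> p y * g y" for i
      proof -
        have "AE y in \<nu>. 0 < p y \<longrightarrow> 0 < r (u i) y \<and> \<bar>ln (p y / r (u i) y)\<bar> \<le> g y"
          using gb u by (intro AEd[THEN iffD1]) blast
        moreover have "AE y in \<nu>. 0 \<le> p y" using pnn by (auto intro: AE_I2)
        ultimately show ?thesis
        proof eventually_elim
          case (elim y)
          show ?case
          proof (cases "p y = 0")
            case True then show ?thesis by simp
          next
            case False
            then have "0 < p y" using elim by simp
            then have "\<bar>ln (p y / r (u i) y)\<bar> * p y \<le> g y * p y"
              using elim by (intro mult_right_mono) auto
            then show ?thesis using \<open>0 < p y\<close> by (simp add: abs_mult mult.commute)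
          qed
        qed
      qed
      show "AE y in \<nu>. (\<lambda>i. ln (p y / r (u i) y) * p y) \<longlonglongrightarrow> ln (p y / r a y) * p y"
      proof -
        have "AE y in \<nu>. \<forall>i. 0 < p y \<longrightarrow> 0 < r (u i) y \<and> \<bar>ln (p y / r (u i) y)\<bar> \<le> g y"
          using gb u by (simp add: AE_all_countable AEd[symmetric])
        moreover have "AE y in \<nu>. 0 < p y \<longrightarrow> 0 < r a y \<and> \<bar>ln (p y / r a y)\<bar> \<le> g y"
          using gb a by (intro AEd[THEN iffD1]) blast
        moreover have "AE y in \<nu>. 0 < p y \<longrightarrow> continuous_on {0..1} (\<lambda>\<theta>. r \<theta> y)"
          using cont by (intro AEd[THEN iffD1]) blast
        moreover have "AE y in \<nu>. 0 \<le> p y" using pnn by (auto intro: AE_I2)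
        ultimately show ?thesis
        proof eventually_elim
          case (elim y)
          show ?case
          proof (cases "0 < p y")
            case False
            then have "p y = 0" using elim by simp
            then show ?thesis by simp
          next
            case True
            have "(\<lambda>i. r (u i) y) \<longlonglongrightarrow> r a y"
              using elim True u a ua continuous_on_sequentially[of "{0..1}" "\<lambda>\<theta>. r \<theta> y"]
              by (auto simp: o_def)
            then have "(\<lambda>i. p y / r (u i) y) \<longlonglongrightarrow> p y / r a y"
              using elim True by (intro tendsto_divide tendsto_const) auto
            then have "(\<lambda>i. ln (p y / r (u i) y)) \<longlonglongrightarrow> ln (p y / r a y)"
              using elim True by (intro tendsto_ln) auto
            then show ?thesis by (intro tendsto_mult tendsto_const)
          qed
        qed
      qed
    qed
  qed
qed


lemma argmin_cont:
  fixes f g m :: "real \<Rightarrow> real"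
  assumes fc: "continuous_on {0..1} f" and gc: "continuous_on {0..1} g"
    and mmin: "\<forall>t\<in>{0..1}. m t \<in> {0..1} \<and> (\<forall>s\<in>{0..1}. t * f (m t) + (1-t) * g (m t) \<le> t * f s + (1-t) * g s)"
    and muniq: "\<forall>t\<in>{0..1}. \<forall>s\<in>{0..1}. (\<forall>u\<in>{0..1}. t * f s + (1-t) * g s \<le> t * f u + (1-t) * g u) \<longrightarrow> s = m t"
  shows "continuous_on {0..1} m"
proof -
  define h where "h s t = t * f s + (1-t) * g s" for s t
  have "compact ((\<lambda>s. f s - g s) ` {0..1})"
    by (intro compact_continuous_image continuous_intros fc gc) auto
  then obtain B0 where B0: "\<forall>s\<in>{0..1}. \<bar>f s - g s\<bar> \<le> B0"
    by (auto dest!: compact_imp_bounded simp: bounded_real)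
  define B where "B = B0 + 1"
  have B: "\<forall>s\<in>{0..1}. \<bar>f s - g s\<bar> \<le> B" "B > 0"
  proof -
    have "\<bar>f 0 - g 0\<bar> \<le> B0" using B0 by auto
    then have "0 \<le> B0" by linarith
    then show "\<forall>s\<in>{0..1}. \<bar>f s - g s\<bar> \<le> B" "B > 0" using B0 by (auto simp: B_def)
  qed
  have hdiff: "\<bar>h s t' - h s t\<bar> \<le> \<bar>t' - t\<bar> * B" if "s \<in> {0..1}" for s t t'
  proof -
    have "h s t' - h s t = (t' - t) * (f s - g s)" by (simp add: h_def algebra_simps)
    then have "\<bar>h s t' - h s t\<bar> = \<bar>t' - t\<bar> * \<bar>f s - g s\<bar>" by (simp add: abs_mult)
    also have "\<dots> \<le> \<bar>t' - t\<bar> * B" using B that by (intro mult_left_mono) auto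
    finally show ?thesis .
  qed
  show ?thesis
    unfolding continuous_on_iff
  proof (intro ballI allI impI)
    fix t e :: real assume t: "t \<in> {0..1}" and e: "0 < e"
    define K where "K = {s\<in>{0..1}. e \<le> \<bar>s - m t\<bar>}"
    show "\<exists>d>0. \<forall>t'\<in>{0..1}. dist t' t < d \<longrightarrow> dist (m t') (m t) < e"
    proof (cases "K = {}")
      case True
      show ?thesis
        using True mmin by (intro exI[of _ 1]) (auto simp: K_def dist_real_def)
    next
      case False
      have "K = {0..1} \<inter> {s. e \<le> \<bar>s - m t\<bar>}" by (auto simp: K_def)
      moreover have "closed {s. e \<le> \<bar>s - m t\<bar>}"
        by (intro closed_Collect_le continuous_intros)
      ultimately have "compact K" by (simp add: compact_Int_closed)
      moreover have "continuous_on K (\<lambda>s. h s t)"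
        unfolding h_def K_def
        by (intro continuous_intros continuous_on_subset[OF fc] continuous_on_subset[OF gc]) auto
      ultimately obtain s0 where s0: "s0 \<in> K" "\<forall>s\<in>K. h s0 t \<le> h s t"
        using continuous_attains_inf[of K "\<lambda>s. h s t"] False by auto
      have s01: "s0 \<in> {0..1}" and s0ne: "s0 \<noteq> m t" using s0 e by (auto simp: K_def)
      have mt: "m t \<in> {0..1}" "\<forall>s\<in>{0..1}. h (m t) t \<le> h s t" using mmin t by (auto simp: h_def)
      have "\<not> (\<forall>u\<in>{0..1}. h s0 t \<le> h u t)"
        using muniq t s01 s0ne unfolding h_def by blast
      then obtain u where u: "u \<in> {0..1}" "h u t < h s0 t" by (auto simp: not_le)
      define \<delta> where "\<delta> = h s0 t - h (m t) t"
      have \<delta>: "\<delta> > 0" using u mt unfolding \<delta>_def by force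
      show ?thesis
      proof (intro exI[of _ "\<delta> / (2*B)"] conjI ballI impI)
        show "\<delta> / (2*B) > 0" using \<delta> B by simp
        fix t' assume t': "t' \<in> {0..1}" and dt: "dist t' t < \<delta> / (2*B)"
        have tb: "\<bar>t' - t\<bar> * B < \<delta>/2"
          using dt B by (simp add: dist_real_def field_simps)
        show "dist (m t') (m t) < e"
        proof (rule ccontr)
          assume "\<not> dist (m t') (m t) < e"
          then have "m t' \<in> K" using mmin t' by (auto simp: K_def dist_real_def)
          then have "h s0 t \<le> h (m t') t" using s0 by blast
          moreover have "\<bar>h (m t') t' - h (m t') t\<bar> \<le> \<bar>t' - t\<bar> * B"
            using hdiff mmin t' by blast
          moreover have "\<bar>h (m t) t' - h (m t) t\<bar> \<le> \<bar>t' - t\<bar> * B"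
            using hdiff mt by blast
          moreover have "h (m t') t' \<le> h (m t) t'"
            using mmin t' mt unfolding h_def by blast
          ultimately show False using tb unfolding \<delta>_def abs_le_iff by argo
        qed
      qed
    qed
  qed
qed

theorem mainTheorem11:
  fixes Y :: "'y::euclidean_space set"
    and \<nu> :: "'y measure"
    and q :: "'x::finite \<Rightarrow> 'y \<Rightarrow> real"
    and q\<theta> :: "real \<Rightarrow> 'x \<Rightarrow> 'y \<Rightarrow> real"
    and prior :: "real measure"
    and F :: "real measure \<Rightarrow> 'x set"
  assumes A1_Y: "compact Y"
    and A1_nu: "prob_space \<nu>" "sets \<nu> = sets (restrict_space borel Y)"
    and A1_q: "\<forall>x. is_density \<nu> (q x)"
    and A1_q\<theta>: "\<forall>\<theta>\<in>{0..1}. \<forall>x. is_density \<nu> (q\<theta> \<theta> x)"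
    and A2_cont: "\<forall>x. AE y in Qdist \<nu> q x. continuous_on {0..1} (\<lambda>\<theta>. q\<theta> \<theta> x y)"
    and A2_dom: "\<forall>x. \<exists>g. g \<in> borel_measurable (Qdist \<nu> q x) \<and>
                   integrable (Qdist \<nu> q x) (\<lambda>y. (g y)\<^sup>2) \<and>
                   (\<forall>\<theta>\<in>{0..1}. AE y in Qdist \<nu> q x.
                      0 < q\<theta> \<theta> x y \<and> \<bar>ln (q x y / q\<theta> \<theta> x y)\<bar> \<le> g y)"
    and A3: "prior \<in> Delta_Theta"
      "\<forall>U. open U \<and> U \<inter> {0..1} \<noteq> {} \<longrightarrow> 0 < measure prior (U \<inter> {0..1})"
    and A4: "\<forall>\<mu>\<in>Delta_Theta. F \<mu> \<noteq> {}" "uhc_policy F"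
    and A5_unique: "\<forall>\<sigma>\<in>Delta_X. \<exists>!\<theta>. \<theta> \<in> {0..1} \<and>
                      (\<forall>t\<in>{0..1}. KLD \<nu> q q\<theta> \<theta> \<sigma> \<le> KLD \<nu> q q\<theta> t \<sigma>)"
    and A5_curv: "\<forall>\<sigma>\<in>Delta_X. KL_min \<nu> q q\<theta> \<sigma> \<in> {0<..<1} \<longrightarrow>
                    (\<exists>K' d. 0 < d \<and>
                       (\<exists>e>0. \<forall>t. \<bar>t - KL_min \<nu> q q\<theta> \<sigma>\<bar> < e \<longrightarrow>
                          ((\<lambda>s. KLD \<nu> q q\<theta> s \<sigma>) has_real_derivative K' t) (at t)) \<and>
                       (K' has_real_derivative d) (at (KL_min \<nu> q q\<theta> \<sigma>)))"
    and fin: "finite (equilibrium_models \<nu> q q\<theta> F)"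
  shows "let ts = sorted_list_of_set (equilibrium_models \<nu> q q\<theta> F \<union> {0, 1}) in
           \<forall>n < length ts - 1.
             (\<forall>\<theta>\<in>{ts ! n <..< ts ! (n+1)}. \<forall>x\<in>F (dirac_Theta \<theta>).
                 KL_min \<nu> q q\<theta> (dirac_X x) > \<theta>)
             \<noteq>
             (\<forall>\<theta>\<in>{ts ! n <..< ts ! (n+1)}. \<forall>x\<in>F (dirac_Theta \<theta>).
                 KL_min \<nu> q q\<theta> (dirac_X x) < \<theta>)"
  proof -
  define Km where "Km \<sigma> = KL_min \<nu> q q\<theta> \<sigma>" for \<sigma>
  define KL where "KL s \<sigma> = KLD \<nu> q q\<theta> s \<sigma>" for s \<sigma>
  define Ts where "Ts = equilibrium_models \<nu> q q\<theta> F"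
  define dT where "dT \<theta> = dirac_Theta \<theta>" for \<theta>
  have F1: "Km \<sigma> \<in> {0..1} \<and> (\<forall>t\<in>{0..1}. KL (Km \<sigma>) \<sigma> \<le> KL t \<sigma>)" if "\<sigma> \<in> Delta_X" for \<sigma>
    using theI'[OF A5_unique[rule_format, OF that]]
    unfolding Km_def KL_def KL_min_def by blast
  have F1u: "s = Km \<sigma>" if "\<sigma> \<in> Delta_X" "s \<in> {0..1}" "\<forall>t\<in>{0..1}. KL s \<sigma> \<le> KL t \<sigma>" for \<sigma> s
    using F1[OF that(1)] A5_unique[rule_format, OF that(1)] that(2,3) unfolding KL_def by blast
  have F2: "dT \<theta> \<in> Delta_Theta" if "\<theta> \<in> {0..1}" for \<theta>
    using that unfolding dT_def dirac_Theta_def Delta_Theta_def Theta_space_def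
    by (auto intro!: prob_space_return simp: space_restrict_space)
  have Icont: "continuous_on {0..1} (\<lambda>s. \<integral>y. ln (q x y / q\<theta> s x y) * q x y \<partial>\<nu>)" for x
    by (rule KL_integral_cont[where r="\<lambda>\<theta>. q\<theta> \<theta> x"])
      (use A1_q A1_q\<theta> A2_cont[unfolded Qdist_def] A2_dom[unfolded Qdist_def] in auto)
  have F3: "continuous_on {0..1} (\<lambda>s. KL s \<sigma>)" for \<sigma>
    unfolding KL_def KLD_def by (intro continuous_intros Icont)
  have F4: "dirac_X x \<in> Delta_X" for x
    by (simp add: Delta_X_def dirac_X_def)
  have F5: "\<theta> \<in> Ts" if "\<sigma> \<in> Delta_X" "supp_X \<sigma> \<subseteq> F (dT \<theta>)" "Km \<sigma> = \<theta>" for \<sigma> \<theta>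
    using that unfolding Ts_def equilibrium_models_def is_equilibrium_def Km_def dT_def by blast
  have Ts01: "Ts \<subseteq> {0..1}"
    using F1 unfolding Ts_def equilibrium_models_def is_equilibrium_def Km_def by blast
  have L1: "Km (dirac_X x) \<noteq> \<theta>" if "\<theta> \<notin> Ts" "x \<in> F (dT \<theta>)" for x \<theta>
  proof
    assume "Km (dirac_X x) = \<theta>"
    moreover have "supp_X (dirac_X x) \<subseteq> F (dT \<theta>)" using that by (auto simp: supp_X_def dirac_X_def)
    ultimately show False using F5[OF F4] that by blast
  qed
  have L2: "\<not> (Km (dirac_X x') < \<theta> \<and> \<theta> < Km (dirac_X x))"
    if "\<theta> \<notin> Ts" "x \<in> F (dT \<theta>)" "x' \<in> F (dT \<theta>)" for x x' \<theta>
  proof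
    assume lt: "Km (dirac_X x') < \<theta> \<and> \<theta> < Km (dirac_X x)"
    define \<sigma> where "\<sigma> t = (\<lambda>z. t * dirac_X x z + (1-t) * dirac_X x' z)" for t
    define f where "f s = KL s (dirac_X x)" for s
    define g where "g s = KL s (dirac_X x')" for s
    have KLs: "KL s (\<sigma> t) = t * f s + (1-t) * g s" for s t
      unfolding KL_def KLD_def \<sigma>_def f_def g_def sum_distrib_left sum.distrib[symmetric]
      by (intro sum.cong refl) (simp add: algebra_simps)
    have sD: "\<sigma> t \<in> Delta_X" if "t \<in> {0..1}" for t
    proof -
      have d1: "(\<Sum>z\<in>UNIV. dirac_X y z) = 1" for y using F4[of y] by (simp add: Delta_X_def)
      have "(\<Sum>z\<in>UNIV. \<sigma> t z) = t * (\<Sum>z\<in>UNIV. dirac_X x z) + (1-t) * (\<Sum>z\<in>UNIV. dirac_X x' z)"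
        unfolding \<sigma>_def by (simp add: sum.distrib sum_distrib_left)
      then have "(\<Sum>z\<in>UNIV. \<sigma> t z) = 1" by (simp add: d1)
      moreover have "\<forall>z. 0 \<le> \<sigma> t z" using that by (auto simp: \<sigma>_def dirac_X_def)
      ultimately show ?thesis by (simp add: Delta_X_def)
    qed
    define m where "m t = Km (\<sigma> t)" for t
    have mc: "continuous_on {0..1} m"
    proof (rule argmin_cont[of f g])
      show "continuous_on {0..1} f" "continuous_on {0..1} g" unfolding f_def g_def by (rule F3)+
      show "\<forall>t\<in>{0..1}. m t \<in> {0..1} \<and> (\<forall>s\<in>{0..1}. t * f (m t) + (1-t) * g (m t) \<le> t * f s + (1-t) * g s)"
        using F1[OF sD] unfolding m_def KLs by blast
      show "\<forall>t\<in>{0..1}. \<forall>s\<in>{0..1}. (\<forall>u\<in>{0..1}. t * f s + (1-t) * g s \<le> t * f u + (1-t) * g u) \<longrightarrow> s = m t"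
        using F1u[OF sD] unfolding m_def KLs by blast
    qed
    have "\<sigma> 0 = dirac_X x'" "\<sigma> 1 = dirac_X x" by (auto simp: \<sigma>_def)
    then have "m 0 \<le> \<theta>" "\<theta> \<le> m 1" using lt by (auto simp: m_def)
    then obtain t where t: "0 \<le> t" "t \<le> 1" "m t = \<theta>"
      using IVT'[of m 0 \<theta> 1] mc by auto
    have "supp_X (\<sigma> t) \<subseteq> F (dT \<theta>)"
      using that by (auto simp: supp_X_def \<sigma>_def dirac_X_def split: if_splits)
    then have "\<theta> \<in> Ts" using F5[OF sD] t unfolding m_def by auto
    then show False using that by blast
  qed
  have L3: "eventually (\<lambda>\<theta>'. \<theta>' \<in> {0..1} \<longrightarrow> F (dT \<theta>') \<subseteq> F (dT \<theta>)) (nhds \<theta>)"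
    if th: "\<theta> \<in> {0..1}" for \<theta>
  proof -
    have "eventually (\<lambda>\<theta>'. F (dT \<theta>') \<subseteq> F (dT \<theta>)) (inf (nhds \<theta>) (principal {0..1}))"
    proof (rule sequentially_imp_eventually_nhds_within, intro allI impI, elim conjE)
      fix u :: "nat \<Rightarrow> real" assume u: "\<forall>n. u n \<in> {0..1}" and ut: "u \<longlonglongrightarrow> \<theta>"
      have "weak_conv_Theta (\<lambda>n. dT (u n)) (dT \<theta>)"
        unfolding weak_conv_Theta_def
      proof (intro allI impI)
        fix h :: "real \<Rightarrow> real" assume hc: "continuous_on {0..1} h"
        have hm: "h \<in> borel_measurable Theta_space"
          unfolding Theta_space_def by (rule borel_measurable_continuous_on_restrict[OF hc])
        have ev: "(\<integral>s. h s \<partial>dT v) = h v" if "v \<in> {0..1}" for v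
          unfolding dT_def dirac_Theta_def
          by (rule integral_return) (use that hm in \<open>auto simp: Theta_space_def space_restrict_space\<close>)
        have "(\<lambda>n. h (u n)) \<longlonglongrightarrow> h \<theta>"
          using hc u th ut continuous_on_sequentially[of "{0..1}" h] by (auto simp: o_def)
        then show "(\<lambda>n. \<integral>s. h s \<partial>dT (u n)) \<longlonglongrightarrow> (\<integral>s. h s \<partial>dT \<theta>)"
          using ev u th by simp
      qed
      moreover have "\<forall>n. dT (u n) \<in> Delta_Theta" using F2 u by blast
      ultimately have "(\<forall>n. dT (u n) \<in> Delta_Theta) \<and> weak_conv_Theta (\<lambda>n. dT (u n)) (dT \<theta>)"
        by blast
      then show "eventually (\<lambda>n. F (dT (u n)) \<subseteq> F (dT \<theta>)) sequentially"
        by (rule A4(2)[unfolded uhc_policy_def, rule_format, OF F2[OF th]])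
    qed
    then show ?thesis by (simp add: eventually_inf_principal)
  qed
  show ?thesis
    unfolding Let_def
  proof (intro allI impI)
    fix n
    define ts where "ts = sorted_list_of_set (Ts \<union> {0, 1})"
    assume n: "n < length (sorted_list_of_set (equilibrium_models \<nu> q q\<theta> F \<union> {0, 1})) - 1"
    then have n': "n + 1 < length ts" unfolding ts_def Ts_def by linarith
    have finT: "finite (Ts \<union> {0, 1})" using fin unfolding Ts_def by simp
    have sts: "set ts = Ts \<union> {0,1}" using finT unfolding ts_def by (rule set_sorted_list_of_set)
    have ssw: "sorted_wrt (<) ts" unfolding ts_def by (rule strict_sorted_list_of_set)
    have srt: "sorted ts" unfolding ts_def by (rule sorted_sorted_list_of_set)
    define a where "a = ts ! n"
    define b where "b = ts ! (n+1)"
    have ab: "a < b" unfolding a_def b_def using ssw n' by (simp add: sorted_wrt_nth_less)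
    have "a \<in> set ts" "b \<in> set ts" using n' unfolding a_def b_def by simp_all
    then have a01: "a \<in> {0..1}" "b \<in> {0..1}" using sts Ts01 by auto
    define I where "I = {a<..<b}"
    have I01: "I \<subseteq> {0..1}" using a01 by (auto simp: I_def)
    have ITs: "\<theta> \<notin> Ts" if "\<theta> \<in> I" for \<theta>
    proof
      assume "\<theta> \<in> Ts"
      then have "\<theta> \<in> set ts" using sts by auto
      then obtain k where k: "k < length ts" "ts ! k = \<theta>" by (auto simp: in_set_conv_nth)
      show False
      proof (cases "k \<le> n")
        case True
        then have "ts ! k \<le> ts ! n" using srt n' by (intro sorted_nth_mono) auto
        then show False using k that by (auto simp: I_def a_def)
      next
        case False
        then have "ts ! (n+1) \<le> ts ! k" using srt k by (intro sorted_nth_mono) auto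
        then show False using k that by (auto simp: I_def b_def)
      qed
    qed
    define Sp where "Sp = {\<theta>\<in>I. \<forall>x\<in>F (dT \<theta>). Km (dirac_X x) > \<theta>}"
    define Sn where "Sn = {\<theta>\<in>I. \<forall>x\<in>F (dT \<theta>). Km (dirac_X x) < \<theta>}"
    have Fne: "F (dT \<theta>) \<noteq> {}" if "\<theta> \<in> I" for \<theta>
      using A4(1) F2 I01 that by blast
    have cover: "I \<subseteq> Sp \<union> Sn"
    proof
      fix \<theta> assume th: "\<theta> \<in> I"
      show "\<theta> \<in> Sp \<union> Sn"
      proof (cases "\<forall>x\<in>F (dT \<theta>). Km (dirac_X x) > \<theta>")
        case True then show ?thesis using th by (auto simp: Sp_def)
      next
        case False
        then obtain x' where x': "x' \<in> F (dT \<theta>)" "Km (dirac_X x') \<le> \<theta>" by (auto simp: not_less)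
        then have x'l: "Km (dirac_X x') < \<theta>" using L1[OF ITs[OF th]] by force
        have "\<forall>x\<in>F (dT \<theta>). Km (dirac_X x) < \<theta>"
        proof
          fix x assume x: "x \<in> F (dT \<theta>)"
          show "Km (dirac_X x) < \<theta>"
            using L1[OF ITs[OF th] x] L2[OF ITs[OF th] x x'(1)] x'l by linarith
        qed
        then show ?thesis using th by (auto simp: Sn_def)
      qed
    qed
    have disj: "Sp \<inter> Sn \<inter> I = {}"
    proof (rule ccontr)
      assume "Sp \<inter> Sn \<inter> I \<noteq> {}"
      then obtain \<theta> where th: "\<theta> \<in> Sp" "\<theta> \<in> Sn" "\<theta> \<in> I" by blast
      then obtain x where "x \<in> F (dT \<theta>)" using Fne by blast
      then show False using th by (force simp: Sp_def Sn_def)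
    qed
    have openI: "open I" by (simp add: I_def)
    have opens: "open {\<theta>\<in>I. \<forall>x\<in>F (dT \<theta>). P (Km (dirac_X x)) \<theta>}"
      if Pev: "\<And>c \<theta>. P c \<theta> \<Longrightarrow> eventually (\<lambda>\<theta>'. P c \<theta>') (nhds \<theta>)" for P
    proof (rule open_subopen[THEN iffD2], intro ballI)
      fix \<theta> assume th: "\<theta> \<in> {\<theta>\<in>I. \<forall>x\<in>F (dT \<theta>). P (Km (dirac_X x)) \<theta>}"
      have finF: "finite (F (dT \<theta>))" by simp
      have "\<forall>x\<in>F (dT \<theta>). eventually (\<lambda>\<theta>'. P (Km (dirac_X x)) \<theta>') (nhds \<theta>)"
      proof
        fix x assume "x \<in> F (dT \<theta>)"
        then have "P (Km (dirac_X x)) \<theta>" using th by blast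
        then show "eventually (\<lambda>\<theta>'. P (Km (dirac_X x)) \<theta>') (nhds \<theta>)" by (rule Pev)
      qed
      then have "eventually (\<lambda>\<theta>'. \<forall>x\<in>F (dT \<theta>). P (Km (dirac_X x)) \<theta>') (nhds \<theta>)"
        by (rule eventually_ball_finite[OF finF])
      moreover have "eventually (\<lambda>\<theta>'. \<theta>' \<in> I) (nhds \<theta>)"
        using openI th by (intro eventually_nhds_in_open) auto
      moreover have "eventually (\<lambda>\<theta>'. \<theta>' \<in> {0..1} \<longrightarrow> F (dT \<theta>') \<subseteq> F (dT \<theta>)) (nhds \<theta>)"
        by (rule L3) (use th I01 in blast)
      ultimately have ev: "eventually (\<lambda>\<theta>'. \<theta>' \<in> {\<theta>\<in>I. \<forall>x\<in>F (dT \<theta>). P (Km (dirac_X x)) \<theta>}) (nhds \<theta>)"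
      proof eventually_elim
        case (elim \<theta>')
        then have "\<theta>' \<in> {0..1}" using I01 by blast
        then have "F (dT \<theta>') \<subseteq> F (dT \<theta>)" using elim by blast
        then show ?case using elim by blast
      qed
      then show "\<exists>T. open T \<and> \<theta> \<in> T \<and> T \<subseteq> {\<theta>\<in>I. \<forall>x\<in>F (dT \<theta>). P (Km (dirac_X x)) \<theta>}"
      proof -
        obtain T where T: "open T" "\<theta> \<in> T" "\<forall>x\<in>T. x \<in> {\<theta>\<in>I. \<forall>x\<in>F (dT \<theta>). P (Km (dirac_X x)) \<theta>}"
          using ev unfolding eventually_nhds by blast
        then have "T \<subseteq> {\<theta>\<in>I. \<forall>x\<in>F (dT \<theta>). P (Km (dirac_X x)) \<theta>}" by (intro subsetI) blast
        then show ?thesis using T by blast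
      qed
    qed
    have evlt: "eventually (\<lambda>\<theta>'. \<theta>' < c) (nhds \<theta>)" if "\<theta> < c" for c \<theta> :: real
      using eventually_nhds_in_open[of "{..<c}" \<theta>] that by simp
    have evgt: "eventually (\<lambda>\<theta>'. c < \<theta>') (nhds \<theta>)" if "c < \<theta>" for c \<theta> :: real
      using eventually_nhds_in_open[of "{c<..}" \<theta>] that by simp
    have "open Sp" unfolding Sp_def
      by (rule opens[of "\<lambda>c \<theta>. \<theta> < c"]) (rule evlt)
    have "open Sn" unfolding Sn_def
      by (rule opens[of "\<lambda>c \<theta>. c < \<theta>"]) (rule evgt)
    have "connected I" by (simp add: I_def)
    then have cases: "Sp \<inter> I = {} \<or> Sn \<inter> I = {}"
      using connectedD[OF _ \<open>open Sp\<close> \<open>open Sn\<close> disj cover] by blast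
    define mid where "mid = (a + b) / 2"
    have mid: "mid \<in> I" using ab by (simp add: I_def mid_def)
    obtain xm where xm: "xm \<in> F (dT mid)" using Fne[OF mid] by blast
    have "(\<forall>\<theta>\<in>I. \<forall>x\<in>F (dT \<theta>). Km (dirac_X x) > \<theta>) \<noteq> (\<forall>\<theta>\<in>I. \<forall>x\<in>F (dT \<theta>). Km (dirac_X x) < \<theta>)"
    proof (cases "Sp \<inter> I = {}")
      case True
      then have "\<forall>\<theta>\<in>I. \<forall>x\<in>F (dT \<theta>). Km (dirac_X x) < \<theta>" using cover by (auto simp: Sn_def Sp_def)
      moreover have "\<not> (\<forall>\<theta>\<in>I. \<forall>x\<in>F (dT \<theta>). Km (dirac_X x) > \<theta>)"
        using calculation mid xm by force
      ultimately show ?thesis by blast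
    next
      case False
      then have "Sn \<inter> I = {}" using cases by blast
      then have "\<forall>\<theta>\<in>I. \<forall>x\<in>F (dT \<theta>). Km (dirac_X x) > \<theta>" using cover by (auto simp: Sn_def Sp_def)
      moreover have "\<not> (\<forall>\<theta>\<in>I. \<forall>x\<in>F (dT \<theta>). Km (dirac_X x) < \<theta>)"
        using calculation mid xm by force
      ultimately show ?thesis by blast
    qed
    then show "(\<forall>\<theta>\<in>{sorted_list_of_set (equilibrium_models \<nu> q q\<theta> F \<union> {0, 1}) ! n<..<sorted_list_of_set (equilibrium_models \<nu> q q\<theta> F \<union> {0, 1}) ! (n + 1)}.
            \<forall>x\<in>F (dirac_Theta \<theta>). \<theta> < KL_min \<nu> q q\<theta> (dirac_X x)) \<noteq>
          (\<forall>\<theta>\<in>{sorted_list_of_set (equilibrium_models \<nu> q q\<theta> F \<union> {0, 1}) ! n<..<sorted_list_of_set (equilibrium_models \<nu> q q\<theta> F \<union> {0, 1}) ! (n + 1)}.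
            \<forall>x\<in>F (dirac_Theta \<theta>). KL_min \<nu> q q\<theta> (dirac_X x) < \<theta>)"
      unfolding I_def a_def b_def ts_def Ts_def dT_def Km_def .
  qed
qed

end
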